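(* The function $s \mapsto s\,\dfrac{\theta_3'(s)}{\theta_3(s)}$ is strictly increasing on $[1,\infty)$.
   Context: For $s>0$, $\theta_3(s) = \sum_{k\in\mathbb{Z}} e^{-\pi k^2 s}$. *)

theory Defs
  imports "HOL-Analysis.Analysis"
begin

definition theta3 :: "real \<Rightarrow> real" where
  "theta3 s = (\<Sum>\<^sub>\<infinity>k::int. exp (- pi * (real_of_int k)\<^sup>2 * s))"

end

theory Submission
  imports Defs "HOL-Real_Asymp.Real_Asymp"
begin

definition Sm :: "nat \<Rightarrow> real \<Rightarrow> real" where
  "Sm m s = (\<Sum>n. (real n + 1)^m * exp(-pi*(real n + 1)^2 * s))"

lemma summ_gen:
  assumes "c > 0"
  shows "summable (\<lambda>n::nat. (real n + 1) ^ k * exp(-c * (real n + 1)^2))"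
proof (rule summable_comparison_test_bigo)
  show "summable (\<lambda>n. norm (1 / real n ^ 2))"
    using inverse_power_summable[of 2, where 'a=real] by (simp add: divide_inverse)
  show "(\<lambda>n::nat. (real n + 1) ^ k * exp(-c * (real n + 1)^2)) \<in> O(\<lambda>n. 1/ real n^2)"
    using assms by real_asymp
qed

lemma Sm_summable:
  assumes "s > 0"
  shows "summable (\<lambda>n. (real n + 1)^m * exp(-pi*(real n + 1)^2 * s))"
proof -
  have "summable (\<lambda>n::nat. (real n + 1) ^ m * exp(- (pi * s) * (real n + 1)^2))"
    by (rule summ_gen) (use assms in simp)
  then show ?thesis by (simp add: algebra_simps)
qed

lemma Sm_deriv:
  assumes "s > 0"
  shows "(Sm m has_field_derivative (-pi * Sm (m+2) s)) (at s)"
proof -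
  define f where "f n x = (real n + 1)^m * exp(-pi*(real n + 1)^2 * x)" for n x
  define f' where "f' n x = (real n + 1)^m * (exp(-pi*(real n + 1)^2 * x) * (-pi*(real n + 1)^2))" for n x
  have der: "(f n has_field_derivative f' n x) (at x within {s/2<..})" for n x
    unfolding f_def f'_def by (auto intro!: derivative_eq_intros)
  have unif: "uniformly_convergent_on {s/2<..} (\<lambda>n x. \<Sum>i<n. f' i x)"
  proof (rule Weierstrass_m_test')
    show "norm (f' n x) \<le> pi * ((real n + 1)^(m+2) * exp(-pi*(real n + 1)^2 * (s/2)))"
      if "x \<in> {s/2<..}" for n x
    proof -
      have "exp(-pi*(real n + 1)^2 * x) \<le> exp(-pi*(real n + 1)^2 * (s/2))"
        using that by (auto intro!: mult_left_mono simp: mult_le_cancel_left)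
      moreover have "norm (f' n x) = pi * ((real n + 1)^(m+2) * exp(-pi*(real n + 1)^2 * x))"
        unfolding f'_def by (simp add: abs_mult power_add power2_eq_square)
      ultimately show ?thesis
        by (simp add: mult_left_mono)
    qed
    show "summable (\<lambda>n. pi * ((real n + 1)^(m+2) * exp(-pi*(real n + 1)^2 * (s/2))))"
      by (intro summable_mult Sm_summable) (use assms in simp)
  qed
  have "summable (\<lambda>n. f n s)" unfolding f_def by (rule Sm_summable[OF assms])
  from has_field_derivative_series'(2)[OF convex_real_interval(3) der unif _ this, of s] assms
  have D: "((\<lambda>x. \<Sum>n. f n x) has_field_derivative (\<Sum>n. f' n s)) (at s)"
    by (simp add: interior_open)
  have "(\<lambda>x. \<Sum>n. f n x) = Sm m" by (auto simp: f_def Sm_def fun_eq_iff)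
  moreover have "(\<Sum>n. f' n s) = -pi * Sm (m+2) s"
  proof -
    have "(\<Sum>n. f' n s) = (\<Sum>n. -pi * ((real n + 1)^(m+2) * exp(-pi*(real n + 1)^2 * s)))"
      by (intro suminf_cong) (simp add: f'_def power_add power2_eq_square)
    also have "\<dots> = -pi * Sm (m+2) s"
      unfolding Sm_def by (rule suminf_mult[OF Sm_summable[OF assms]])
    finally show ?thesis .
  qed
  ultimately show ?thesis using D by simp
qed

lemma theta3_eq:
  assumes "s > 0"
  shows "theta3 s = 1 + 2 * Sm 0 s"
proof -
  define e where "e k = exp (- pi * (real_of_int k)\<^sup>2 * s)" for k :: int
  have sm: "(\<lambda>n. exp(-pi*(real n + 1)^2 * s)) sums Sm 0 s"
    using summable_sums[OF Sm_summable[OF assms, of 0]] by (simp add: Sm_def)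
  have hs: "((\<lambda>n. exp(-pi*(real n + 1)^2 * s)) has_sum Sm 0 s) UNIV"
    by (rule sums_nonneg_imp_has_sum[OF sm]) simp
  have inj1: "inj (\<lambda>n::nat. int n + 1)" by (auto simp: inj_def)
  have inj2: "inj (\<lambda>n::nat. - int n - 1)" by (auto simp: inj_def)
  have P: "(e has_sum Sm 0 s) (range (\<lambda>n::nat. int n + 1))"
    unfolding has_sum_reindex[OF inj1] using hs by (simp add: e_def o_def add.commute)
  have N: "(e has_sum Sm 0 s) (range (\<lambda>n::nat. - int n - 1))"
  proof -
    have "e (- int n - 1) = exp(-pi*(real n + 1)^2 * s)" for n
      unfolding e_def by (simp add: power2_eq_square algebra_simps)
    then show ?thesis unfolding has_sum_reindex[OF inj2] using hs by (simp add: o_def)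
  qed
  have Z: "(e has_sum 1) {0}" by (rule has_sum_finiteI) (simp_all add: e_def)
  have d1: "range (\<lambda>n::nat. int n + 1) \<inter> range (\<lambda>n::nat. - int n - 1) = {}" by auto
  have d2: "{0} \<inter> (range (\<lambda>n::nat. int n + 1) \<union> range (\<lambda>n::nat. - int n - 1)) = {}" by auto
  have U: "{0} \<union> (range (\<lambda>n::nat. int n + 1) \<union> range (\<lambda>n::nat. - int n - 1)) = UNIV"
  proof -
    have "k \<in> {0} \<union> (range (\<lambda>n::nat. int n + 1) \<union> range (\<lambda>n::nat. - int n - 1))" for k :: int
    proof (cases "k > 0")
      case True then have "k = int (nat (k - 1)) + 1" by simp
      then show ?thesis by blast
    next
      case False
      show ?thesis
      proof (cases "k = 0")
        case False
        with \<open>\<not> k > 0\<close> have "k = - int (nat (- k - 1)) - 1" by simp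
        then show ?thesis by blast
      qed simp
    qed
    then show ?thesis by blast
  qed
  have "(e has_sum (1 + (Sm 0 s + Sm 0 s))) UNIV"
    using has_sum_Un_disjoint[OF Z has_sum_Un_disjoint[OF P N d1] d2] U by simp
  then show ?thesis unfolding theta3_def e_def[symmetric] by (auto dest: infsumI)
qed


lemma exp_neg_pi_le: "exp (-pi) \<le> 1/10"
proof -
  have e1: "exp (1::real) \<ge> 27/10" using e_approx_32 by (simp add: abs_if split: if_splits)
  have "exp (3::real) = exp 1 ^ 3" using exp_of_nat_mult[of 3 "1::real"] by simp
  also have "\<dots> \<ge> (27/10)^3" using e1 by (intro power_mono) auto
  finally have "exp (3::real) \<ge> (27/10)^3" .
  moreover have "(10::real) \<le> (27/10)^3" by (simp add: power3_eq_cube)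
  ultimately have "exp (3::real) \<ge> 10" by linarith
  moreover have "exp 3 \<le> exp pi" using pi_gt3 by simp
  ultimately have "exp pi \<ge> 10" by linarith
  then show ?thesis by (simp add: exp_minus divide_simps)
qed

lemma nat_bound: "real n + 2 \<le> 2 * 2^n"
proof -
  have "n < 2^n" by (rule less_exp)
  then have "real n + 1 \<le> 2^n" by (metis of_nat_le_iff of_nat_numeral of_nat_power of_nat_Suc Suc_leI add.commute)
  moreover have "(1::real) \<le> 2^n" by simp
  ultimately show ?thesis by linarith
qed

lemma term_bound:
  assumes "s \<ge> 1" "m \<le> 4"
  shows "(real n + 2)^m * exp(-pi*(real n + 2)^2 * s) \<le> exp(- pi * s) / 10 * (1/2)^n"
proof -
  define E where "E = exp (-pi)"
  have E: "0 < E" "E \<le> 1/10" using exp_neg_pi_le by (auto simp: E_def)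
  have "(real n + 2)^m \<le> (real n + 2)^4" by (rule power_increasing) (use assms in auto)
  also have "\<dots> \<le> (2 * 2^n)^4" by (rule power_mono[OF nat_bound]) auto
  also have "\<dots> = 16 * 16^n"
  proof -
    have "(2::real)^(n*4) = 16^n" by (subst mult.commute) (simp add: power_mult)
    then show ?thesis by (simp add: power_mult_distrib flip: power_mult)
  qed
  finally have p: "(real n + 2)^m \<le> 16 * 16^n" .
  have "(real n + 2)^2 * s \<ge> s + (4 * real n + 3)"
  proof -
    have "(real n + 2)^2 * s = s + ((real n + 2)^2 - 1) * s" by (simp add: algebra_simps)
    moreover have "((real n + 2)^2 - 1) * s \<ge> ((real n + 2)^2 - 1) * 1"
      using assms one_le_power[of "real n + 2" 2] by (intro mult_left_mono) auto
    then have "((real n + 2)^2 - 1) * s \<ge> ((real n + 2)^2 - 1)" by simp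
    moreover have "(real n + 2)^2 - 1 \<ge> 4 * real n + 3" by (simp add: power2_eq_square algebra_simps)
    ultimately show ?thesis by linarith
  qed
  then have "exp(-pi*(real n + 2)^2 * s) \<le> exp(- pi * s + (4 * real n + 3) * (-pi))"
  proof -
    have "pi * (s + (4 * real n + 3)) \<le> pi * ((real n + 2)^2 * s)"
      using pi_gt_zero \<open>(real n + 2)^2 * s \<ge> s + (4 * real n + 3)\<close> by (intro mult_left_mono) auto
    then show ?thesis unfolding exp_le_cancel_iff by (simp add: algebra_simps)
  qed
  also have "\<dots> = exp(- pi * s) * E^(4*n+3)"
  proof -
    have "exp(- pi * s + (4 * real n + 3) * (-pi)) = exp(- pi * s) * exp(real (4*n+3) * (-pi))"
      by (simp add: exp_add[symmetric])
    also have "\<dots> = exp(- pi * s) * E^(4*n+3)" by (simp only: E_def exp_of_nat_mult)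
    finally show ?thesis .
  qed
  also have "\<dots> \<le> exp(- pi * s) * (1/10)^(4*n+3)"
    using E by (intro mult_left_mono power_mono) auto
  finally have e: "exp(-pi*(real n + 2)^2 * s) \<le> exp(- pi * s) * (1/10)^(4*n+3)" .
  have "(real n + 2)^m * exp(-pi*(real n + 2)^2 * s) \<le> (16 * 16^n) * (exp(- pi * s) * (1/10)^(4*n+3))"
    by (intro mult_mono p e) auto
  also have "\<dots> = exp(- pi * s) * (16/1000) * (16/10000)^n"
  proof -
    have h1: "(1/10::real)^(4*n+3) = (1/1000) * (1/10000)^n"
      by (simp add: power_add power_mult power_divide)
    have h2: "(16::real)^n * (1/10000)^n = (16/10000)^n"
      by (simp add: power_mult_distrib[symmetric])
    show ?thesis unfolding h1 h2[symmetric] by (simp add: algebra_simps)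
  qed
  also have "\<dots> \<le> exp(- pi * s) * (1/10) * (1/2)^n"
    by (intro mult_mono power_mono) auto
  finally show ?thesis by simp
qed

lemma Sm_bounds:
  assumes "s \<ge> 1" "m \<le> 4"
  shows "exp(- pi * s) \<le> Sm m s" "Sm m s \<le> 6/5 * exp(- pi * s)"
proof -
  let ?f = "\<lambda>n. (real n + 1)^m * exp(-pi*(real n + 1)^2 * s)"
  let ?q = "exp(- pi * s)"
  have sf: "summable ?f" by (rule Sm_summable) (use assms in auto)
  have st: "summable (\<lambda>n. ?f (Suc n))" using sf by (subst summable_Suc_iff)
  have eq: "Sm m s = ?q + (\<Sum>n. ?f (Suc n))"
    unfolding Sm_def suminf_split_head[OF sf] by simp
  have f2: "?f (Suc n) = (real n + 2)^m * exp(-pi*(real n + 2)^2 * s)" for n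
  proof -
    have "real (Suc n) + 1 = real n + 2" by simp
    then show ?thesis by (simp only:)
  qed
  have "0 \<le> (\<Sum>n. ?f (Suc n))" by (intro suminf_nonneg st) auto
  then show "?q \<le> Sm m s" using eq by simp
  have "(\<Sum>n. ?f (Suc n)) \<le> (\<Sum>n. ?q / 10 * (1/2)^n)"
  proof (intro suminf_le st summable_mult summable_geometric)
    show "?f (Suc n) \<le> ?q / 10 * (1/2)^n" for n
      using term_bound[OF assms, of n] f2[of n] by linarith
  qed simp
  also have "\<dots> = ?q / 10 * 2"
    by (subst suminf_mult) (auto simp: suminf_geometric)
  finally show "Sm m s \<le> 6/5 * ?q" using eq by simp
qed

lemma key_ineq:
  fixes q a0 a2 a4 s :: real
  assumes q: "0 < q" "q \<le> 1/10" and s: "s \<ge> 1"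
    and b: "q \<le> a0" "a0 \<le> 6/5*q" "q \<le> a2" "a2 \<le> 6/5*q" "q \<le> a4" "a4 \<le> 6/5*q"
  shows "pi * s * (a4 * (1 + 2*a0) - 2 * a2^2) > a2 * (1 + 2*a0)"
proof -
  have "a4 * (1 + 2*a0) \<ge> q * (1 + 2*q)" using b q by (intro mult_mono) auto
  moreover have "a2^2 \<le> (6/5*q)^2" using b q by (intro power_mono) auto
  ultimately have br: "a4 * (1 + 2*a0) - 2 * a2^2 \<ge> q - 22/25 * q^2"
    by (simp add: power2_eq_square algebra_simps)
  have "q^2 \<le> q / 10" using q by (simp add: power2_eq_square mult_left_mono)
  with br q have br2: "a4 * (1 + 2*a0) - 2 * a2^2 \<ge> 9/10 * q" by linarith
  have "pi * s \<ge> pi * 1" using s by (intro mult_left_mono) auto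
  then have ps: "pi * s \<ge> 3" using pi_gt3 by linarith
  have "pi * s * (a4 * (1 + 2*a0) - 2 * a2^2) \<ge> 3 * (9/10 * q)"
    using ps br2 q by (intro mult_mono) auto
  moreover have "a2 * (1 + 2*a0) \<le> (6/5*q) * (1 + 2*(6/5*q))"
    using b q by (intro mult_mono) auto
  moreover have "(6/5*q) * (1 + 2*(6/5*q)) < 3 * (9/10 * q)"
  proof -
    have "(6/5*q) * (1 + 2*(6/5*q)) = q * (6/5 + 72/25*q)" by (simp add: algebra_simps)
    moreover have "q * (6/5 + 72/25*q) < q * (27/10)" using q by (intro mult_strict_left_mono) auto
    ultimately show ?thesis by linarith
  qed
  ultimately show ?thesis by linarith
qed


lemma deriv_theta3:
  assumes "s > 0"
  shows "deriv theta3 s = -2 * pi * Sm 2 s"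
proof -
  have S0: "(Sm 0 has_field_derivative (-pi * Sm 2 s)) (at s)" using Sm_deriv[OF assms, of 0] by (simp add: numeral_2_eq_2)
  have "((\<lambda>s. 1 + 2 * Sm 0 s) has_field_derivative (0 + 2 * (-pi * Sm 2 s))) (at s)"
    by (intro DERIV_add DERIV_const DERIV_cmult S0)
  then have "(theta3 has_field_derivative (0 + 2 * (-pi * Sm 2 s))) (at s)"
    by (rule has_field_derivative_transform_within_open[where S="{0<..}"]) (use assms theta3_eq in auto)
  then show ?thesis by (simp add: DERIV_imp_deriv)
qed

lemma H_deriv_pos:
  assumes "x \<ge> 1"
  shows "\<exists>y. ((\<lambda>s. -2*pi*(s * Sm 2 s / (1 + 2 * Sm 0 s))) has_real_derivative y) (at x) \<and> y > 0"
proof -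
  have x0: "x > 0" using assms by simp
  let ?q = "exp (- pi * x)"
  have q: "0 < ?q" "?q \<le> 1/10"
  proof -
    have "?q \<le> exp (- pi)" using assms pi_gt_zero by (simp add: mult_le_cancel_left1)
    then show "?q \<le> 1/10" using exp_neg_pi_le by linarith
  qed simp
  have b0: "?q \<le> Sm 0 x" "Sm 0 x \<le> 6/5 * ?q" using Sm_bounds[OF assms, of 0] by auto
  have b2: "?q \<le> Sm 2 x" "Sm 2 x \<le> 6/5 * ?q" using Sm_bounds[OF assms, of 2] by auto
  have b4: "?q \<le> Sm 4 x" "Sm 4 x \<le> 6/5 * ?q" using Sm_bounds[OF assms, of 4] by auto
  have K: "pi * x * (Sm 4 x * (1 + 2*Sm 0 x) - 2 * (Sm 2 x)^2) > Sm 2 x * (1 + 2*Sm 0 x)"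
    by (rule key_ineq[OF q assms b0 b2 b4])
  have S0: "(Sm 0 has_field_derivative (-pi * Sm 2 x)) (at x)" using Sm_deriv[OF x0, of 0] by (simp add: numeral_2_eq_2)
  have S2: "(Sm 2 has_field_derivative (-pi * Sm 4 x)) (at x)" using Sm_deriv[OF x0, of 2] by simp
  have d1: "((\<lambda>s. s * Sm 2 s) has_field_derivative (1 * Sm 2 x + (-pi * Sm 4 x) * x)) (at x)"
    by (intro DERIV_mult DERIV_ident S2)
  have d2: "((\<lambda>s. 1 + 2 * Sm 0 s) has_field_derivative (0 + 2 * (-pi * Sm 2 x))) (at x)"
    by (intro DERIV_add DERIV_const DERIV_cmult S0)
  have g0: "1 + 2 * Sm 0 x > 0" using b0 q by linarith
  note d3 = DERIV_cmult[OF DERIV_quotient[OF d1 d2], of "-2*pi"]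
  let ?D = "-2*pi * (((1 * Sm 2 x + (-pi * Sm 4 x) * x) * (1 + 2 * Sm 0 x) - (0 + 2 * (-pi * Sm 2 x)) * (x * Sm 2 x)) / (1 + 2 * Sm 0 x) ^ Suc (Suc 0))"
  have "((\<lambda>s. -2*pi*(s * Sm 2 s / (1 + 2 * Sm 0 s))) has_real_derivative ?D) (at x)"
    by (rule d3) (use g0 in simp)
  moreover have "?D > 0"
  proof -
    have num: "((1 * Sm 2 x + (-pi * Sm 4 x) * x) * (1 + 2 * Sm 0 x) - (0 + 2 * (-pi * Sm 2 x)) * (x * Sm 2 x))
       = - (pi * x * (Sm 4 x * (1 + 2*Sm 0 x) - 2 * (Sm 2 x)^2) - Sm 2 x * (1 + 2*Sm 0 x))"
      by (simp add: algebra_simps power2_eq_square)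
    have "0 < (pi * x * (Sm 4 x * (1 + 2*Sm 0 x) - 2 * (Sm 2 x)^2) - Sm 2 x * (1 + 2*Sm 0 x)) / (1 + 2 * Sm 0 x) ^ Suc (Suc 0)"
      using K g0 by (intro divide_pos_pos) auto
    then have "0 < 2 * pi * ((pi * x * (Sm 4 x * (1 + 2*Sm 0 x) - 2 * (Sm 2 x)^2) - Sm 2 x * (1 + 2*Sm 0 x)) / (1 + 2 * Sm 0 x) ^ Suc (Suc 0))"
      by (intro mult_pos_pos) auto
    moreover have "?D = 2 * pi * ((pi * x * (Sm 4 x * (1 + 2*Sm 0 x) - 2 * (Sm 2 x)^2) - Sm 2 x * (1 + 2*Sm 0 x)) / (1 + 2 * Sm 0 x) ^ Suc (Suc 0))"
      unfolding num by (simp only: minus_divide_left[symmetric] mult_minus_right mult_minus_left minus_minus)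
    ultimately show ?thesis by simp
  qed
  ultimately show ?thesis by blast
qed

theorem mainTheorem10:
  shows "strict_mono_on {1..} (\<lambda>s::real. s * deriv theta3 s / theta3 s)"
proof (rule strict_mono_onI)
  define H where "H s = -2*pi*(s * Sm 2 s / (1 + 2 * Sm 0 s))" for s
  have eq: "s * deriv theta3 s / theta3 s = H s" if "s \<ge> 1" for s :: real
  proof -
    have "s > 0" using that by simp
    then show ?thesis by (simp add: deriv_theta3 theta3_eq H_def)
  qed
  fix r s :: real assume rs: "r \<in> {1..}" "s \<in> {1..}" "r < s"
  have "H r < H s"
  proof (rule DERIV_pos_imp_increasing[OF rs(3)])
    fix x assume "r \<le> x" "x \<le> s"
    then have "x \<ge> 1" using rs by auto
    from H_deriv_pos[OF this] show "\<exists>y. DERIV H x :> y \<and> 0 < y" unfolding H_def[abs_def] .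
  qed
  then show "r * deriv theta3 r / theta3 r < s * deriv theta3 s / theta3 s"
    using eq rs by auto
qed

end
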